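(* Let $\ell$ be a positive odd integer and $n\ge 3$ an integer. Suppose there exist $k$ distinct primes $p_1,\dots,p_k\in P(n)$ such that any two of the numbers $p_1-1,\dots,p_k-1$ have no common odd prime factor. If $\Omega_\ell(n)$ is a powerful number, then $\ell$ has at least $k$ distinct prime factors.
   Context: A positive integer $a$ is called a powerful number if for every prime $p$, $p\mid a$ implies $p^2\mid a$. $\Omega_\ell(n)=\prod_{a=1}^{n}(a^\ell+1)$. For a positive integer $n$, $P(n)$ denotes the set of primes $p$ with $\frac{n+1}{2}<p\le n+1$. *)

theory Defs
  imports "HOL-Computational_Algebra.Primes"
begin

definition powerful :: "nat \<Rightarrow> bool" where
  "powerful a \<longleftrightarrow> a > 0 \<and> (\<forall>p. prime p \<longrightarrow> p dvd a \<longrightarrow> p^2 dvd a)"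

definition Omega :: "nat \<Rightarrow> nat \<Rightarrow> nat" where
  "Omega l n = (\<Prod>a=1..n. a ^ l + 1)"

(* (n+1)/2 < p  is written as  n+1 < 2*p  over the naturals *)
definition Pset :: "nat \<Rightarrow> nat set" where
  "Pset n = {p. prime p \<and> n + 1 < 2 * p \<and> p \<le> n + 1}"

end

theory Submission
  imports Defs "HOL-Number_Theory.Number_Theory"
begin

lemma rootA:
  fixes p l x :: nat
  assumes p: "prime p" "odd p" and l: "l > 0" and cop: "coprime l (p - 1)"
    and d: "p dvd x ^ l + 1"
  shows "p dvd x + 1"
proof -
  obtain u m where um: "l * u = (p - 1) * m + gcd l (p - 1)"
    using bezout_nat[of l "p - 1"] l by auto
  hence um: "l * u = (p - 1) * m + 1" using cop by simp
  have "even (p - 1)" using p by simp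
  hence "odd (l * u)" using um by simp
  hence ou: "odd u" by simp
  have ndx: "\<not> p dvd x"
  proof
    assume "p dvd x"
    hence "p dvd x ^ l" using l by (meson dvd_power dvd_trans)
    with d have "p dvd (x ^ l + 1) - x ^ l" by (rule dvd_diff_nat)
    with p show False by simp
  qed
  have f: "[x ^ (p - 1) = 1] (mod p)" using fermat_theorem[OF p(1) ndx] .
  have "[x ^ (l * u) = x] (mod p)"
  proof -
    have "x ^ (l * u) = x * (x ^ (p - 1)) ^ m" using um
      by (simp add: power_add power_mult)
    moreover have "[x * (x ^ (p - 1)) ^ m = x * 1 ^ m] (mod p)"
      by (intro cong_mult cong_pow f cong_refl)
    ultimately show ?thesis by simp
  qed
  hence c1: "[int x ^ (l * u) = int x] (mod int p)"
    using cong_int_iff by (metis of_nat_power)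
  have "int p dvd int (x ^ l + 1)" using d by (simp only: of_nat_dvd_iff)
  hence "int p dvd int x ^ l - (-1)" by (simp add: add.commute)
  hence "[int x ^ l = -1] (mod int p)" by (simp only: cong_iff_dvd_diff)
  hence "[(int x ^ l) ^ u = (-1) ^ u] (mod int p)" by (rule cong_pow)
  hence "[int x ^ (l * u) = -1] (mod int p)" using ou by (simp add: power_mult)
  hence "[int x = -1] (mod int p)" using c1 by (meson cong_sym cong_trans)
  hence "int p dvd int x - (-1)" by (simp only: cong_iff_dvd_diff)
  hence "int p dvd int (x + 1)" by (simp add: add.commute)
  thus ?thesis by (simp only: of_nat_dvd_iff)
qed

lemma binom2:
  fixes a b :: int
  shows "\<exists>t. (a + b) ^ j = a ^ j + of_nat j * a ^ (j - 1) * b + b^2 * t"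
proof (induction j)
  case 0 then show ?case by simp
next
  case (Suc j)
  then obtain t where t: "(a + b) ^ j = a ^ j + of_nat j * a ^ (j - 1) * b + b^2 * t" by blast
  have e: "of_nat j * a ^ (j - 1) * a = of_nat j * a ^ j"
    by (cases j) (auto simp: algebra_simps)
  have "(a + b) ^ Suc j = (a + b) * (a ^ j + of_nat j * a ^ (j - 1) * b + b^2 * t)"
    using t by simp
  also have "\<dots> = a ^ Suc j + of_nat (Suc j) * a ^ j * b + b^2 * (a * t + b * t + of_nat j * a ^ (j - 1))"
    using e by (simp add: algebra_simps power2_eq_square)
  finally show ?case by auto
qed

lemma lemC:
  fixes p l :: nat
  assumes p: "prime p" and l: "odd l" and d: "p^2 dvd (p - 1) ^ l + 1"
  shows "p dvd l"
proof -
  have p1: "p \<ge> 1" using p prime_gt_0_nat by (simp add: Suc_leI)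
  obtain t where t: "(-1 + int p) ^ l = (-1) ^ l + int l * (-1) ^ (l - 1) * int p + (int p)^2 * t"
    using binom2 by blast
  have "even (l - 1)" using l by simp
  hence t2: "(-1 + int p) ^ l = -1 + int l * int p + (int p)^2 * t" using t l by simp
  have "int ((p - 1) ^ l + 1) = (-1 + int p) ^ l + 1" using p1 by (simp add: of_nat_diff)
  also have "\<dots> = int l * int p + (int p)^2 * t" using t2 by simp
  finally have "(int p)^2 dvd int l * int p + (int p)^2 * t"
    using d by (metis of_nat_dvd_iff of_nat_power)
  hence "(int p)^2 dvd int l * int p" by (simp add: dvd_add_left_iff)
  hence "int p * int p dvd int l * int p" by (simp add: power2_eq_square)
  hence "int p dvd int l" using p by (simp add: prime_gt_0_nat)
  thus ?thesis by simp
qed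


lemma lemC2:
  fixes p l :: nat
  assumes p: "prime p" and l: "odd l"
  shows "p dvd (p - 1) ^ l + 1"
proof -
  have p1: "p \<ge> 1" using p prime_gt_0_nat by (simp add: Suc_leI)
  obtain t where t: "(-1 + int p) ^ l = (-1) ^ l + int l * (-1) ^ (l - 1) * int p + (int p)^2 * t"
    using binom2 by blast
  have "even (l - 1)" using l by simp
  hence t2: "(-1 + int p) ^ l = -1 + int l * int p + (int p)^2 * t" using t l by simp
  have "int ((p - 1) ^ l + 1) = (-1 + int p) ^ l + 1" using p1 by (simp add: of_nat_diff)
  also have "\<dots> = int p * (int l + int p * t)" using t2 by (simp add: algebra_simps power2_eq_square)
  finally have "int p dvd int ((p - 1) ^ l + 1)" by simp
  thus ?thesis by (simp only: of_nat_dvd_iff)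
qed

lemma Pset_ge3:
  assumes "p \<in> Pset n" "n \<ge> 3"
  shows "prime p" "p \<ge> 3" "odd p" "p \<le> n + 1" "n + 1 < 2 * p"
proof -
  show pr: "prime p" "p \<le> n + 1" "n + 1 < 2 * p" using assms by (auto simp: Pset_def)
  show g: "p \<ge> 3" using assms by (auto simp: Pset_def)
  show "odd p" using pr g prime_odd_nat by simp
qed

lemma Omega_split:
  assumes "p \<in> Pset n" "n \<ge> 3"
  shows "Omega l n = ((p - 1) ^ l + 1) * (\<Prod>a\<in>{1..n} - {p - 1}. a ^ l + 1)"
proof -
  have "p - 1 \<in> {1..n}" using Pset_ge3[OF assms] by auto
  thus ?thesis unfolding Omega_def by (rule prod.remove[OF finite_atLeastAtMost])
qed

lemma lemB:
  fixes p l n :: nat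
  assumes P: "p \<in> Pset n" and n: "n \<ge> 3" and l: "l > 0" "odd l"
    and cop: "coprime l (p - 1)" and d: "p^2 dvd Omega l n"
  shows "p dvd l"
proof -
  note pp = Pset_ge3[OF P n]
  define R where "R = (\<Prod>a\<in>{1..n} - {p - 1}. a ^ l + 1)"
  have nR: "\<not> p dvd R"
  proof
    assume "p dvd R"
    hence "\<exists>a\<in>{1..n} - {p - 1}. p dvd a ^ l + 1"
      unfolding R_def by (subst (asm) prime_dvd_prod_iff[OF _ pp(1)]) auto
    then obtain a where a: "a \<in> {1..n} - {p - 1}" "p dvd a ^ l + 1" by blast
    have "p dvd a + 1" using rootA[OF pp(1) pp(3) l(1) cop a(2)] .
    then obtain c where c: "a + 1 = p * c" by blast
    have "c \<noteq> 0" using c by (cases "c = 0") auto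
    moreover have "a \<le> n" using a(1) by simp
    hence "p * c < p * 2" using c pp(5) by linarith
    hence "c < 2" by simp
    ultimately have "c = 1" by simp
    with c a(1) show False by auto
  qed
  have "coprime p R" using nR pp(1) by (simp add: prime_imp_coprime)
  hence "coprime (p^2) R" by simp
  moreover have "p^2 dvd ((p - 1) ^ l + 1) * R" using d Omega_split[OF P n] R_def by simp
  ultimately have "p^2 dvd (p - 1) ^ l + 1" using coprime_dvd_mult_left_iff by blast
  thus ?thesis using lemC[OF pp(1) l(2)] by blast
qed

lemma noadj:
  assumes "p \<in> Pset n" "q \<in> Pset n" "n \<ge> 3" "p dvd q - 1"
  shows False
proof -
  note a = Pset_ge3[OF assms(1,3)] and b = Pset_ge3[OF assms(2,3)]
  obtain c where c: "q - 1 = p * c" using assms(4) by blast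
  have "q - 1 \<ge> 2" using b by linarith
  hence "c \<noteq> 0" using c by (cases "c = 0") auto
  moreover have "p * c < p * 2" using c a b by linarith
  hence "c < 2" by simp
  ultimately have "c = 1" by simp
  hence "q = p + 1" using c b by simp
  hence "even q" using a by simp
  thus False using b by simp
qed


theorem lemma3:
  fixes l n k :: nat and p :: "nat \<Rightarrow> nat"
  assumes "l > 0" and "odd l" and "n \<ge> 3"
    and "inj_on p {..<k}"
    and "\<And>i. i < k \<Longrightarrow> p i \<in> Pset n"
    and "\<And>i j q. i < k \<Longrightarrow> j < k \<Longrightarrow> i \<noteq> j \<Longrightarrow> prime q \<Longrightarrow> odd q
           \<Longrightarrow> \<not> (q dvd (p i - 1) \<and> q dvd (p j - 1))"
    and "powerful (Omega l n)"
  shows "card (prime_factors l) \<ge> k"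
proof -
  define f where "f i = (if coprime l (p i - 1) then p i
      else (SOME q. prime q \<and> q dvd l \<and> q dvd p i - 1))" for i
  have C: "prime (f i) \<and> f i dvd l \<and> f i = p i" if "i < k" "coprime l (p i - 1)" for i
  proof -
    have P: "p i \<in> Pset n" using assms(5) that(1) .
    note pp = Pset_ge3[OF P assms(3)]
    have "p i dvd Omega l n" unfolding Omega_split[OF P assms(3), of l] using lemC2[OF pp(1) assms(2)] by (rule dvd_mult2)
    hence "(p i)^2 dvd Omega l n" using assms(7) pp(1) unfolding powerful_def by blast
    hence "p i dvd l" using lemB[OF P assms(3) assms(1) assms(2) that(2)] by blast
    thus ?thesis using pp(1) that(2) unfolding f_def by simp
  qed
  have N: "prime (f i) \<and> f i dvd l \<and> f i dvd p i - 1 \<and> odd (f i)" if "i < k" "\<not> coprime l (p i - 1)" for i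
  proof -
    have "gcd l (p i - 1) \<noteq> 1" using that(2) by (metis coprime_iff_gcd_eq_1)
    then obtain q where q: "prime q" "q dvd gcd l (p i - 1)" using prime_factor_nat by blast
    hence "\<exists>q. prime q \<and> q dvd l \<and> q dvd p i - 1" by auto
    hence s: "prime (SOME q. prime q \<and> q dvd l \<and> q dvd p i - 1) \<and> (SOME q. prime q \<and> q dvd l \<and> q dvd p i - 1) dvd l
       \<and> (SOME q. prime q \<and> q dvd l \<and> q dvd p i - 1) dvd p i - 1" by (rule someI_ex)
    have "f i = (SOME q. prime q \<and> q dvd l \<and> q dvd p i - 1)" unfolding f_def using that(2) by simp
    hence "prime (f i) \<and> f i dvd l \<and> f i dvd p i - 1" using s by simp
    moreover have "odd (f i)" using calculation assms(2) dvd_trans[of 2 "f i" l] by blast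
    ultimately show ?thesis by blast
  qed
  have inj: "inj_on f {..<k}"
  proof (rule inj_onI)
    fix i j assume i: "i \<in> {..<k}" and j: "j \<in> {..<k}" and e: "f i = f j"
    show "i = j"
    proof (rule ccontr)
      assume ne: "i \<noteq> j"
      have Pi: "p i \<in> Pset n" "p j \<in> Pset n" using assms(5) i j by auto
      consider "coprime l (p i - 1)" "coprime l (p j - 1)"
        | "coprime l (p i - 1)" "\<not> coprime l (p j - 1)"
        | "\<not> coprime l (p i - 1)" "coprime l (p j - 1)"
        | "\<not> coprime l (p i - 1)" "\<not> coprime l (p j - 1)" by blast
      thus False
      proof cases
        case 1
        hence "p i = p j" using C i j e by auto
        thus False using assms(4) i j ne by (meson inj_onD)
      next
        case 2
        hence "p i dvd p j - 1" using C[of i] N[of j] i j e by auto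
        thus False using noadj Pi assms(3) by blast
      next
        case 3
        hence "p j dvd p i - 1" using C[of j] N[of i] i j e by auto
        thus False using noadj Pi assms(3) by blast
      next
        case 4
        hence "prime (f i)" "odd (f i)" "f i dvd p i - 1" "f i dvd p j - 1"
          using N[of i] N[of j] i j e by auto
        thus False using assms(6)[of i j "f i"] i j ne by auto
      qed
    qed
  qed
  have sub: "f ` {..<k} \<subseteq> prime_factors l"
  proof
    fix x assume "x \<in> f ` {..<k}"
    then obtain i where i: "i < k" "x = f i" by auto
    have "prime x \<and> x dvd l" using C[OF i(1)] N[OF i(1)] i(2) by (cases "coprime l (p i - 1)") auto
    thus "x \<in> prime_factors l" using assms(1) by (auto simp: in_prime_factors_iff)
  qed
  have "card {..<k} \<le> card (prime_factors l)"
    using card_inj_on_le[OF inj sub] by simp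
  thus ?thesis by simp
qed

end
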